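(* Let $(S,+)$ be a commutative cancellative semigroup with no identity element such that its difference group $S-S$ carries a multiplication $\cdot$ making $(S-S,+,\cdot)$ an integral domain. Let $j\in\mathbb{N}$, let $R$ be a nonempty finite set of integral polynomials on $(S-S)^j$, let $A$ be a piecewise syndetic subset of $S$, and let $\langle\vec y_n\rangle_{n=1}^\infty$ be a sequence in $S^j$. Then there exist $a\in S$ and a nonempty finite set $H\subseteq\mathbb{N}$ such that $a+f\big(\sum_{n\in H}\vec y_n\big)\in A$ for every $f\in R$.
   Context: The difference group of a commutative cancellative semigroup $S$ is the abelian group $S-S=\{a-b: a,b\in S\}$, where $a-b$ is the element with $(a-b)+b=a$; $S$ is regarded as a subset of $S-S$, and $S^j\subseteq(S-S)^j$ with coordinatewise addition. An integral polynomial on $(S-S)^j$ is a polynomial function $(S-S)^j\to S-S$ in $j$ variables with coefficients in $S-S$ and zero constant term. For $t\in S$ and $A\subseteq S$, $-t+A=\{s\in S: t+s\in A\}$. A set $A\subseteq S$ is piecewise syndetic if there is a finite $G\subseteq S$ such that for every finite $F\subseteq S$ there is $x\in S$ with $F+x\subseteq\bigcup_{t\in G}(-t+A)$. $\mathbb{N}=\{1,2,\dots\}$. *)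

theory Defs
  imports Main
begin

text \<open>The semigroup S is modelled as a subset of an integral domain type 'a which
  plays the role of the difference group S - S (with its ring structure).
  Vectors in (S-S)^j are functions nat => 'a, of which only coordinates i < j matter.\<close>

definition comm_semigroup_no_identity :: "'a::idom set \<Rightarrow> bool" where
  "comm_semigroup_no_identity S \<longleftrightarrow>
     (\<forall>a\<in>S. \<forall>b\<in>S. a + b \<in> S) \<and>
     \<not> (\<exists>e\<in>S. \<forall>s\<in>S. e + s = s \<and> s + e = s)"

definition difference_group :: "'a::ab_group_add set \<Rightarrow> 'a set" where
  "difference_group S = {a - b | a b. a \<in> S \<and> b \<in> S}"

definition integral_poly :: "nat \<Rightarrow> ((nat \<Rightarrow> 'a::comm_ring_1) \<Rightarrow> 'a) \<Rightarrow> bool" where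
  "integral_poly j f \<longleftrightarrow>
     (\<exists>E c. finite E \<and>
        (\<forall>e\<in>E. (\<forall>i\<ge>j. e i = (0::nat)) \<and> e \<noteq> (\<lambda>_. 0)) \<and>
        (\<forall>x. f x = (\<Sum>e\<in>E. c e * (\<Prod>i<j. x i ^ e i))))"

definition left_translate_inv :: "'a::plus set \<Rightarrow> 'a \<Rightarrow> 'a set \<Rightarrow> 'a set" where
  "left_translate_inv S t A = {s \<in> S. t + s \<in> A}"

definition piecewise_syndetic :: "'a::plus set \<Rightarrow> 'a set \<Rightarrow> bool" where
  "piecewise_syndetic S A \<longleftrightarrow>
     (\<exists>G. finite G \<and> G \<subseteq> S \<and>
        (\<forall>F. finite F \<and> F \<subseteq> S \<longrightarrow>
           (\<exists>x\<in>S. (\<lambda>f. f + x) ` F \<subseteq> (\<Union>t\<in>G. left_translate_inv S t A))))"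

end

theory Submission
  imports Defs "HOL-Library.Function_Algebras" "HOL-Library.Multiset_Order" "HOL-Library.FuncSet"
begin

fun deg_le :: "nat \<Rightarrow> ('v::ab_group_add \<Rightarrow> 'a::ab_group_add) \<Rightarrow> bool" where
  "deg_le 0 g = (\<forall>u v. g u = g v)"
| "deg_le (Suc d) g = (\<forall>x. deg_le d (\<lambda>h. g (h + x) - g h))"

lemma deg_le_const: "deg_le d (\<lambda>_. c)"
  by (induction d arbitrary: c) auto


lemma deg_le_add: "deg_le d f \<Longrightarrow> deg_le d g \<Longrightarrow> deg_le d (\<lambda>h. f h + g h)"
proof (induction d arbitrary: f g)
  case 0 then show ?case by simp metis
next
  case (Suc d)
  show ?case
  proof (simp only: deg_le.simps, intro allI)
    fix x
    have e: "(\<lambda>h. f (h + x) + g (h + x) - (f h + g h)) = (\<lambda>h. (f (h + x) - f h) + (g (h + x) - g h))"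
      by (simp add: fun_eq_iff algebra_simps)
    have "deg_le d (\<lambda>h. f (h + x) - f h)" "deg_le d (\<lambda>h. g (h + x) - g h)" using Suc.prems by auto
    from Suc.IH[OF this] show "deg_le d (\<lambda>h. f (h + x) + g (h + x) - (f h + g h))"
      unfolding e .
  qed
qed

lemma deg_le_uminus: "deg_le d f \<Longrightarrow> deg_le d (\<lambda>h. - f h)"
proof (induction d arbitrary: f)
  case 0 then show ?case by auto
next
  case (Suc d)
  show ?case
  proof (simp only: deg_le.simps, intro allI)
    fix x
    have e: "(\<lambda>h. - f (h + x) - - f h) = (\<lambda>h. - (f (h + x) - f h))"
      by (simp add: fun_eq_iff algebra_simps)
    have "deg_le d (\<lambda>h. f (h + x) - f h)" using Suc.prems by simp
    from Suc.IH[OF this] show "deg_le d (\<lambda>h. - f (h + x) - - f h)"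
      unfolding e .
  qed
qed

lemma deg_le_diff: "deg_le d f \<Longrightarrow> deg_le d g \<Longrightarrow> deg_le d (\<lambda>h. f h - g h)"
  using deg_le_add[of d f "\<lambda>h. - g h"] deg_le_uminus[of d g] by simp

lemma deg_le_Suc: "deg_le d f \<Longrightarrow> deg_le (Suc d) f"
proof (induction d arbitrary: f)
  case 0 then show ?case by simp metis
next
  case (Suc d) then show ?case by auto
qed

lemma deg_le_mono: "deg_le d f \<Longrightarrow> d \<le> d' \<Longrightarrow> deg_le d' f"
proof -
  assume a: "deg_le d f" "d \<le> d'"
  then obtain k where k: "d' = d + k" using le_Suc_ex by blast
  have "deg_le (d + k) f"
  proof (induction k)
    case 0 show ?case using a by simp
  next
    case (Suc k) from deg_le_Suc[OF Suc.IH] show ?case by simp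
  qed
  then show ?thesis using k by simp
qed

lemma deg_le_shift: "deg_le d f \<Longrightarrow> deg_le d (\<lambda>h. f (h + x))"
proof (induction d arbitrary: f)
  case 0 then show ?case by auto
next
  case (Suc d)
  show ?case
  proof (simp only: deg_le.simps, intro allI)
    fix y
    have "deg_le d (\<lambda>h. f (h + y) - f h)" using Suc.prems by simp
    then have "deg_le d (\<lambda>h. f (h + x + y) - f (h + x))" using Suc.IH by blast
    moreover have "(\<lambda>h. f (h + x + y) - f (h + x)) = (\<lambda>h. f (h + y + x) - f (h + x))"
      by (simp add: algebra_simps)
    ultimately show "deg_le d (\<lambda>h. f (h + y + x) - f (h + x))" by simp
  qed
qed

lemma deg_le_Delta: "deg_le d f \<Longrightarrow> deg_le (d - 1) (\<lambda>h. f (h + x) - f h)"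
proof (cases d)
  case 0
  assume "deg_le d f"
  then have "\<forall>u v. f u = f v" using 0 by simp
  then have "(\<lambda>h. f (h + x) - f h) = (\<lambda>_. 0)" by (metis diff_self)
  then show ?thesis by (simp add: deg_le_const)
qed auto

lemma deg_le_0_vanish: "deg_le 0 f \<Longrightarrow> f 0 = 0 \<Longrightarrow> f = (\<lambda>_. 0)"
  unfolding fun_eq_iff by (metis deg_le.simps(1))

definition fdeg :: "('v::ab_group_add \<Rightarrow> 'a::ab_group_add) \<Rightarrow> bool" where
  "fdeg f \<longleftrightarrow> (\<exists>d. deg_le d f)"

definition deg :: "('v::ab_group_add \<Rightarrow> 'a::ab_group_add) \<Rightarrow> nat" where
  "deg f = (LEAST d. deg_le d f)"

lemma deg_le_iff: "fdeg f \<Longrightarrow> deg_le d f \<longleftrightarrow> deg f \<le> d"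
proof
  assume "deg_le d f" then show "deg f \<le> d" unfolding deg_def by (rule Least_le)
next
  assume "fdeg f" "deg f \<le> d"
  then have "deg_le (deg f) f" unfolding fdeg_def deg_def by (auto intro: LeastI_ex)
  then show "deg_le d f" using \<open>deg f \<le> d\<close> deg_le_mono by blast
qed

lemma fdeg_add: "fdeg f \<Longrightarrow> fdeg g \<Longrightarrow> fdeg (\<lambda>h. f h + g h)"
  unfolding fdeg_def by (metis deg_le_add deg_le_mono nat_le_linear)
lemma fdeg_diff: "fdeg f \<Longrightarrow> fdeg g \<Longrightarrow> fdeg (\<lambda>h. f h - g h)"
  unfolding fdeg_def by (metis deg_le_diff deg_le_mono nat_le_linear)

lemma mset_decr:
  fixes f :: "'x \<Rightarrow> nat" and g :: "'y \<Rightarrow> nat"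
  assumes "finite A" "finite B" "AA \<subseteq> A" "inj_on \<phi> AA" "\<phi> ` AA \<subseteq> B"
    "\<forall>a\<in>AA. g (\<phi> a) = f a" "bb \<in> B" "bb \<notin> \<phi> ` AA" "\<forall>a\<in>A - AA. f a < g bb"
  shows "image_mset f (mset_set A) < image_mset g (mset_set B)"
proof -
  have fA1: "finite AA" using assms(1,3) finite_subset by blast
  have eA0: "mset_set (AA \<union> (A - AA)) = mset_set AA + mset_set (A - AA)"
    by (rule mset_set_Union) (use fA1 assms(1) in auto)
  have eA1: "AA \<union> (A - AA) = A" using assms(3) by blast
  have eA: "mset_set A = mset_set AA + mset_set (A - AA)" using eA0 unfolding eA1 .
  have fim: "finite (\<phi> ` AA)" using fA1 by simp
  have eB0: "mset_set (\<phi> ` AA \<union> (B - \<phi> ` AA)) = mset_set (\<phi> ` AA) + mset_set (B - \<phi> ` AA)"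
    by (rule mset_set_Union) (use fim assms(2) in auto)
  have eB1: "\<phi> ` AA \<union> (B - \<phi> ` AA) = B" using assms(5) by blast
  have eB: "mset_set B = mset_set (\<phi> ` AA) + mset_set (B - \<phi> ` AA)" using eB0 unfolding eB1 .
  have "image_mset g (mset_set (\<phi> ` AA)) = image_mset g (image_mset \<phi> (mset_set AA))"
    using image_mset_mset_set[OF assms(4)] by simp
  also have "\<dots> = image_mset (\<lambda>a. g (\<phi> a)) (mset_set AA)"
    by (simp add: multiset.map_comp comp_def)
  also have "\<dots> = image_mset f (mset_set AA)"
    by (rule image_mset_cong) (use assms(6) fA1 in auto)
  finally have eI: "image_mset g (mset_set (\<phi> ` AA)) = image_mset f (mset_set AA)" .
  let ?I = "image_mset f (mset_set AA)"
  let ?K = "image_mset f (mset_set (A - AA))"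
  let ?J = "image_mset g (mset_set (B - \<phi> ` AA))"
  have fBd: "finite (B - \<phi> ` AA)" using assms(2) by simp
  have bbJ: "g bb \<in># ?J" using assms(7,8) fBd by auto
  then have "?J \<noteq> {#}" by auto
  moreover have "\<forall>k\<in>#?K. \<exists>j\<in>#?J. k < j"
  proof
    fix k assume "k \<in># ?K"
    then obtain a where "a \<in> A - AA" "k = f a" using assms(1) by auto
    then have "k < g bb" using assms(9) by auto
    then show "\<exists>j\<in>#?J. k < j" using bbJ by blast
  qed
  ultimately have "multp (<) (?I + ?K) (?I + ?J)" by (rule one_step_implies_multp)
  then show ?thesis unfolding less_multiset_def eA eB image_mset_union eI .
qed

definition eqv :: "('v::ab_group_add \<Rightarrow> 'a::ab_group_add) \<Rightarrow> ('v \<Rightarrow> 'a) \<Rightarrow> bool" where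
  "eqv p q \<longleftrightarrow> deg_le (deg p - 1) (\<lambda>h. p h - q h)"

lemma deg_pos: "fdeg p \<Longrightarrow> p 0 = 0 \<Longrightarrow> p \<noteq> (\<lambda>_. 0) \<Longrightarrow> deg p \<ge> 1"
proof (rule ccontr)
  assume a: "fdeg p" "p 0 = 0" "p \<noteq> (\<lambda>_. 0)" "\<not> deg p \<ge> 1"
  then have "deg_le 0 p" using deg_le_iff[of p 0] by simp
  then show False using deg_le_0_vanish a by blast
qed

lemma deg_le_deg: "fdeg p \<Longrightarrow> deg_le (deg p) p"
  using deg_le_iff by blast

lemma eqv_deg:
  assumes "fdeg p" "fdeg q" "deg p \<ge> 1" "eqv p q"
  shows "deg q = deg p"
proof -
  have a: "deg_le (deg p - 1) (\<lambda>h. p h - q h)" using assms(4) eqv_def by blast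
  have "deg_le (deg p) (\<lambda>h. p h - (p h - q h))"
    by (rule deg_le_diff[OF deg_le_deg[OF assms(1)] deg_le_mono[OF a]]) simp
  then have "deg q \<le> deg p" using deg_le_iff[OF assms(2)] by simp
  moreover have "\<not> deg q \<le> deg p - 1"
  proof
    assume "deg q \<le> deg p - 1"
    then have "deg_le (deg p - 1) q" using deg_le_iff[OF assms(2)] by simp
    from deg_le_add[OF this a] have "deg_le (deg p - 1) p" by simp
    then show False using deg_le_iff[OF assms(1)] assms(3) by simp
  qed
  ultimately show ?thesis by simp
qed

lemma eqv_refl: "eqv p p"
  unfolding eqv_def by (simp add: deg_le_const)

lemma eqv_sym:
  assumes "fdeg p" "fdeg q" "deg p \<ge> 1" "eqv p q"
  shows "eqv q p"
proof -
  have a: "deg_le (deg p - 1) (\<lambda>h. p h - q h)" using assms(4) eqv_def by blast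
  from deg_le_uminus[OF a] have "deg_le (deg p - 1) (\<lambda>h. q h - p h)" by simp
  then show ?thesis unfolding eqv_def using eqv_deg[OF assms] by simp
qed

lemma eqv_trans:
  assumes "fdeg p" "fdeg q" "deg p \<ge> 1" "eqv p q" "eqv q r"
  shows "eqv p r"
proof -
  have dq: "deg q = deg p" using eqv_deg[OF assms(1-4)] .
  have a: "deg_le (deg p - 1) (\<lambda>h. p h - q h)" using assms(4) eqv_def by blast
  have b: "deg_le (deg p - 1) (\<lambda>h. q h - r h)" using assms(5) eqv_def dq by metis
  from deg_le_add[OF a b] show ?thesis unfolding eqv_def by simp
qed

definition good :: "('v::ab_group_add \<Rightarrow> 'a::ab_group_add) set \<Rightarrow> bool" where
  "good P \<longleftrightarrow> finite P \<and> (\<forall>p\<in>P. fdeg p \<and> p 0 = 0)"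

definition nz :: "('v::ab_group_add \<Rightarrow> 'a::ab_group_add) set \<Rightarrow> ('v \<Rightarrow> 'a) set" where
  "nz P = {p\<in>P. p \<noteq> (\<lambda>_. 0)}"

definition cl :: "('v::ab_group_add \<Rightarrow> 'a::ab_group_add) set \<Rightarrow> ('v \<Rightarrow> 'a) \<Rightarrow> ('v \<Rightarrow> 'a) set" where
  "cl P p = {q\<in>nz P. eqv p q}"

definition cls :: "('v::ab_group_add \<Rightarrow> 'a::ab_group_add) set \<Rightarrow> ('v \<Rightarrow> 'a) set set" where
  "cls P = cl P ` nz P"

definition dg :: "('v::ab_group_add \<Rightarrow> 'a::ab_group_add) set \<Rightarrow> nat" where
  "dg C = deg (SOME p. p \<in> C)"

definition wt :: "('v::ab_group_add \<Rightarrow> 'a::ab_group_add) set \<Rightarrow> nat multiset" where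
  "wt P = image_mset dg (mset_set (cls P))"

lemma good_nz: "good P \<Longrightarrow> p \<in> nz P \<Longrightarrow> fdeg p \<and> p 0 = 0 \<and> deg p \<ge> 1"
  unfolding good_def nz_def using deg_pos by blast

lemma dg_cl: assumes "good P" "p \<in> nz P" shows "dg (cl P p) = deg p"
proof -
  have "p \<in> cl P p" using assms(2) by (simp add: cl_def eqv_refl)
  then have "(SOME q. q \<in> cl P p) \<in> cl P p" by (metis someI)
  then obtain q where q: "q \<in> nz P" "eqv p q" "(SOME q. q \<in> cl P p) = q" unfolding cl_def by blast
  then show ?thesis unfolding dg_def using eqv_deg good_nz assms by metis
qed

lemma cl_eq: assumes "good P" "p \<in> nz P" "q \<in> nz P"
  shows "cl P p = cl P q \<longleftrightarrow> eqv p q"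
proof
  assume "cl P p = cl P q"
  then have "q \<in> cl P p" using assms(3) by (simp add: cl_def eqv_refl)
  then show "eqv p q" by (simp add: cl_def)
next
  assume e: "eqv p q"
  have gp: "fdeg p" "deg p \<ge> 1" "fdeg q" "deg q \<ge> 1" using good_nz assms by blast+
  have eq': "eqv q p" using eqv_sym gp e by blast
  show "cl P p = cl P q"
    unfolding cl_def using eqv_trans[OF gp(1,3,2) e] eqv_trans[OF gp(3,1,4) eq'] by blast
qed

definition qq :: "('v::ab_group_add \<Rightarrow> 'a::ab_group_add) \<Rightarrow> ('v \<Rightarrow> 'a) \<Rightarrow> 'v \<Rightarrow> ('v \<Rightarrow> 'a)" where
  "qq p1 p x = (\<lambda>h. p (h + x) - p x - p1 h)"

definition ph :: "('v::ab_group_add \<Rightarrow> 'a::ab_group_add) \<Rightarrow> ('v \<Rightarrow> 'a) \<Rightarrow> ('v \<Rightarrow> 'a)" where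
  "ph p1 p = (if deg p1 < deg p then p else (\<lambda>h. p h - p1 h))"

lemma K2: "fdeg p \<Longrightarrow> deg_le (deg p - 1) (\<lambda>h. qq p1 p x h - (p h - p1 h))"
proof -
  assume "fdeg p"
  from deg_le_Delta[OF deg_le_deg[OF this], of x]
  have "deg_le (deg p - 1) (\<lambda>h. (p (h + x) - p h) - p x)"
    by (rule deg_le_diff[OF _ deg_le_const, of _ _ "p x", simplified])
  moreover have "(\<lambda>h. (p (h + x) - p h) - p x) = (\<lambda>h. qq p1 p x h - (p h - p1 h))"
    by (simp add: qq_def fun_eq_iff algebra_simps)
  ultimately show ?thesis by simp
qed

lemma fdeg_qq: assumes "fdeg p" "fdeg p1" shows "fdeg (qq p1 p x)"
proof -
  obtain d where d: "deg_le d p" "deg_le d p1" using assms unfolding fdeg_def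
    by (meson deg_le_mono nat_le_linear)
  have "deg_le d (\<lambda>h. p (h + x) - p x - p1 h)"
    by (rule deg_le_diff[OF deg_le_diff[OF deg_le_shift[OF d(1)] deg_le_const] d(2)])
  then show ?thesis unfolding fdeg_def qq_def by blast
qed

lemma hat:
  assumes "fdeg p" "fdeg p1" "deg p1 \<le> deg p"
  shows "deg_le (deg p - 1) (\<lambda>h. ph p1 p h - qq p1 p x h)"
proof -
  have k2: "deg_le (deg p - 1) (\<lambda>h. qq p1 p x h - (p h - p1 h))" using K2 assms(1) .
  have "deg_le (deg p - 1) (\<lambda>h. qq p1 p x h - ph p1 p h)"
  proof (cases "deg p1 < deg p")
    case True
    have "deg_le (deg p - 1) p1" using deg_le_iff[OF assms(2)] True by simp
    from deg_le_diff[OF k2 this] show ?thesis using True by (simp add: ph_def)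
  next
    case False then show ?thesis using k2 by (simp add: ph_def)
  qed
  from deg_le_uminus[OF this] show ?thesis by simp
qed

lemma deg_le_ph: assumes "fdeg p" "fdeg p1" "deg p1 \<le> deg p"
  shows "deg_le (deg p) (ph p1 p)"
  unfolding ph_def using deg_le_deg[OF assms(1)] deg_le_diff[OF deg_le_deg[OF assms(1)]
      deg_le_mono[OF deg_le_deg[OF assms(2)] assms(3)]] by simp

lemma K5:
  assumes "fdeg p" "fdeg p1" "1 \<le> deg p1" "deg p1 \<le> deg p" "deg (qq p1 p x) \<ge> deg p1"
  shows "deg (qq p1 p x) = deg p \<and> (deg p = deg p1 \<longrightarrow> \<not> eqv p p1)"
proof -
  let ?q = "qq p1 p x"
  have fq: "fdeg ?q" using fdeg_qq assms by blast
  have H: "deg_le (deg p - 1) (\<lambda>h. ph p1 p h - ?q h)" using hat assms by blast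
  have "deg_le (deg p) (\<lambda>h. ph p1 p h - (ph p1 p h - ?q h))"
    by (rule deg_le_diff[OF deg_le_ph[OF assms(1,2,4)] deg_le_mono[OF H]]) simp
  then have le: "deg ?q \<le> deg p" using deg_le_iff[OF fq] by simp
  show ?thesis
  proof (cases "deg p1 < deg p")
    case True
    have "\<not> deg ?q \<le> deg p - 1"
    proof
      assume "deg ?q \<le> deg p - 1"
      then have "deg_le (deg p - 1) ?q" using deg_le_iff[OF fq] by simp
      from deg_le_add[OF this H] have "deg_le (deg p - 1) p" using True by (simp add: ph_def)
      then show False using deg_le_iff[OF assms(1)] True by simp
    qed
    then show ?thesis using le True by simp
  next
    case False
    then have dp: "deg p = deg p1" using assms(4) by simp
    have "\<not> eqv p p1"
    proof
      assume "eqv p p1"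
      then have "deg_le (deg p - 1) (\<lambda>h. p h - p1 h)" unfolding eqv_def .
      from deg_le_diff[OF this H] have "deg_le (deg p - 1) ?q" using False by (simp add: ph_def)
      then show False using deg_le_iff[OF fq] assms(3,5) dp by simp
    qed
    then show ?thesis using le assms(5) dp by simp
  qed
qed

lemma K6:
  assumes "fdeg p" "fdeg p'" "fdeg p1" "deg p1 \<le> deg p" "deg p' = deg p"
  shows "deg_le (deg p - 1) (\<lambda>h. qq p1 p x h - qq p1 p' x' h) \<longleftrightarrow> deg_le (deg p - 1) (\<lambda>h. p h - p' h)"
proof -
  have H: "deg_le (deg p - 1) (\<lambda>h. ph p1 p h - qq p1 p x h)" using hat assms by blast
  have H': "deg_le (deg p - 1) (\<lambda>h. ph p1 p' h - qq p1 p' x' h)" using hat[of p' p1 x'] assms by simp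
  have phd: "\<And>h. ph p1 p h - ph p1 p' h = p h - p' h" using assms(5) by (simp add: ph_def)
  show ?thesis
  proof
    assume a: "deg_le (deg p - 1) (\<lambda>h. qq p1 p x h - qq p1 p' x' h)"
    have "deg_le (deg p - 1) (\<lambda>h. ((ph p1 p h - qq p1 p x h) + (qq p1 p x h - qq p1 p' x' h)) - (ph p1 p' h - qq p1 p' x' h))"
      by (rule deg_le_diff[OF deg_le_add[OF H a] H'])
    moreover have "(\<lambda>h. ((ph p1 p h - qq p1 p x h) + (qq p1 p x h - qq p1 p' x' h)) - (ph p1 p' h - qq p1 p' x' h)) = (\<lambda>h. p h - p' h)"
      using phd by (simp add: fun_eq_iff algebra_simps)
    ultimately show "deg_le (deg p - 1) (\<lambda>h. p h - p' h)" by simp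
  next
    assume a: "deg_le (deg p - 1) (\<lambda>h. p h - p' h)"
    have "deg_le (deg p - 1) (\<lambda>h. (a' h - (ph p1 p h - qq p1 p x h)) + (ph p1 p' h - qq p1 p' x' h))"
      if "a' = (\<lambda>h. p h - p' h)" for a'
      using deg_le_add[OF deg_le_diff[OF a H] H'] that by simp
    moreover have "(\<lambda>h. ((p h - p' h) - (ph p1 p h - qq p1 p x h)) + (ph p1 p' h - qq p1 p' x' h)) = (\<lambda>h. qq p1 p x h - qq p1 p' x' h)"
      using phd by (simp add: fun_eq_iff algebra_simps)
    ultimately show "deg_le (deg p - 1) (\<lambda>h. qq p1 p x h - qq p1 p' x' h)" by metis
  qed
qed

definition qf :: "('v::ab_group_add \<Rightarrow> 'a::ab_group_add) set \<Rightarrow> ('v \<Rightarrow> 'a) \<Rightarrow> 'v set \<Rightarrow> ('v \<Rightarrow> 'a) set" where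
  "qf P p1 X = (\<lambda>(p, x). qq p1 p x) ` (nz P \<times> X)"

lemma good_qf:
  assumes "good P" "p1 \<in> nz P" "finite X"
  shows "good (qf P p1 X)"
proof -
  have "finite (nz P)" using assms(1) unfolding good_def nz_def by simp
  then have "finite (qf P p1 X)" unfolding qf_def using assms(3) by simp
  moreover have "\<forall>q\<in>qf P p1 X. fdeg q \<and> q 0 = 0"
  proof
    fix q assume "q \<in> qf P p1 X"
    then obtain p x where px: "p \<in> nz P" "x \<in> X" "q = qq p1 p x" unfolding qf_def by auto
    have "fdeg p" "fdeg p1" "p1 0 = 0" using good_nz assms(1,2) px(1) by blast+
    then show "fdeg q \<and> q 0 = 0" using px fdeg_qq by (simp add: qq_def)
  qed
  ultimately show ?thesis unfolding good_def by blast
qed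

lemma wt_decr:
  assumes gP: "good P" and p1: "p1 \<in> nz P" and mn: "\<forall>p\<in>nz P. deg p1 \<le> deg p" and fX: "finite X"
  shows "wt (qf P p1 X) < wt P"
proof -
  define Q where "Q = qf P p1 X"
  have gQ: "good Q" unfolding Q_def using good_qf assms by blast
  define e where "e = deg p1"
  have p1f: "fdeg p1" "p1 0 = 0" "1 \<le> e" using good_nz[OF gP p1] e_def by auto
  define pick where "pick C = (SOME px. px \<in> nz P \<times> X \<and> qq p1 (fst px) (snd px) \<in> nz Q \<and> C = cl Q (qq p1 (fst px) (snd px)))" for C
  have pick: "fst (pick C) \<in> nz P \<and> snd (pick C) \<in> X \<and> qq p1 (fst (pick C)) (snd (pick C)) \<in> nz Q
      \<and> C = cl Q (qq p1 (fst (pick C)) (snd (pick C)))" if C: "C \<in> cls Q" for C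
  proof -
    obtain q where q: "q \<in> nz Q" "C = cl Q q" using C unfolding cls_def by blast
    then obtain p x where "p \<in> nz P" "x \<in> X" "q = qq p1 p x" unfolding Q_def qf_def nz_def by auto
    then have "\<exists>px. px \<in> nz P \<times> X \<and> qq p1 (fst px) (snd px) \<in> nz Q \<and> C = cl Q (qq p1 (fst px) (snd px))"
      using q by (intro exI[of _ "(p, x)"]) auto
    from someI_ex[OF this] show ?thesis unfolding pick_def by auto
  qed
  define \<phi> where "\<phi> C = cl P (fst (pick C))" for C
  define A1 where "A1 = {C\<in>cls Q. dg C \<ge> e}"
  have fin: "finite (cls Q)" "finite (cls P)"
    using gQ gP unfolding cls_def good_def nz_def by auto
  have info: "fdeg (fst (pick C)) \<and> fst (pick C) \<in> nz P \<and> dg C = deg (fst (pick C))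
      \<and> e \<le> deg (fst (pick C)) \<and> (deg (fst (pick C)) = e \<longrightarrow> \<not> eqv (fst (pick C)) p1)" if "C \<in> A1" for C
  proof -
    let ?p = "fst (pick C)" and ?x = "snd (pick C)"
    have C: "C \<in> cls Q" "dg C \<ge> e" using that A1_def by auto
    note pc = pick[OF C(1)]
    have fp: "fdeg ?p" using good_nz gP pc by blast
    have dC: "dg C = deg (qq p1 ?p ?x)" using pc dg_cl[OF gQ] by metis
    have "e \<le> deg ?p" using mn pc e_def by blast
    then have "deg (qq p1 ?p ?x) = deg ?p \<and> (deg ?p = e \<longrightarrow> \<not> eqv ?p p1)"
      using K5[OF fp p1f(1)] p1f(3) dC C(2) e_def by simp
    then show ?thesis using dC fp pc \<open>e \<le> deg ?p\<close> by simp
  qed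
  have "image_mset dg (mset_set (cls Q)) < image_mset dg (mset_set (cls P))"
  proof (rule mset_decr[where AA = A1 and \<phi> = \<phi> and bb = "cl P p1"])
    show "finite (cls Q)" "finite (cls P)" using fin by auto
    show "A1 \<subseteq> cls Q" unfolding A1_def by auto
    show "\<phi> ` A1 \<subseteq> cls P" unfolding \<phi>_def cls_def using info by blast
    show "\<forall>a\<in>A1. dg (\<phi> a) = dg a" unfolding \<phi>_def using info dg_cl[OF gP] by metis
    show "cl P p1 \<in> cls P" unfolding cls_def using p1 by blast
    show "\<forall>a\<in>cls Q - A1. dg a < dg (cl P p1)"
      using dg_cl[OF gP p1] e_def A1_def by auto
    show "cl P p1 \<notin> \<phi> ` A1"
    proof
      assume "cl P p1 \<in> \<phi> ` A1"
      then obtain C where C: "C \<in> A1" "cl P (fst (pick C)) = cl P p1" unfolding \<phi>_def by auto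
      note ic = info[OF C(1)]
      then have ev: "eqv (fst (pick C)) p1" using cl_eq[OF gP _ p1] C(2) by blast
      have "deg p1 = deg (fst (pick C))" using eqv_deg[OF _ p1f(1) _ ev] ic p1f e_def by simp
      then show False using ic ev e_def by simp
    qed
    show "inj_on \<phi> A1"
    proof (rule inj_onI)
      fix C C' assume C: "C \<in> A1" "C' \<in> A1" "\<phi> C = \<phi> C'"
      let ?p = "fst (pick C)" and ?x = "snd (pick C)" and ?p' = "fst (pick C')" and ?x' = "snd (pick C')"
      note ic = info[OF C(1)] and ic' = info[OF C(2)]
      have pc: "C = cl Q (qq p1 ?p ?x)" "qq p1 ?p ?x \<in> nz Q" using pick C(1) A1_def by auto
      have pc': "C' = cl Q (qq p1 ?p' ?x')" "qq p1 ?p' ?x' \<in> nz Q" using pick C(2) A1_def by auto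
      have ev: "eqv ?p ?p'" using cl_eq[OF gP] ic ic' C(3) unfolding \<phi>_def by blast
      have dp: "deg ?p' = deg ?p" using eqv_deg[OF _ _ _ ev] ic ic' p1f e_def by simp
      have "deg_le (deg ?p - 1) (\<lambda>h. ?p h - ?p' h)" using ev eqv_def by blast
      then have "deg_le (deg ?p - 1) (\<lambda>h. qq p1 ?p ?x h - qq p1 ?p' ?x' h)"
        using K6[of ?p ?p' p1 ?x ?x'] ic ic' p1f dp e_def by blast
      moreover have "deg (qq p1 ?p ?x) = deg ?p" using ic pc dg_cl[OF gQ] by metis
      ultimately have "eqv (qq p1 ?p ?x) (qq p1 ?p' ?x')" unfolding eqv_def by simp
      then show "C = C'" using pc pc' cl_eq[OF gQ] by blast
    qed
  qed
  then show ?thesis unfolding wt_def Q_def .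
qed

definition zs :: "(nat \<Rightarrow> 'v::comm_monoid_add) \<Rightarrow> nat set \<Rightarrow> 'v" where
  "zs y H = (\<Sum>n\<in>H. y n)"

definition PV :: "('v::ab_group_add \<Rightarrow> 'a::ab_group_add) set \<Rightarrow> bool" where
  "PV P \<longleftrightarrow> (\<forall>(y::nat \<Rightarrow> 'v) r. \<exists>N W. finite W \<and> (\<forall>c::'a \<Rightarrow> nat. (\<forall>u. c u < r) \<longrightarrow>
     (\<exists>a H. H \<subseteq> {..<N} \<and> H \<noteq> {} \<and> a \<in> W \<and> (\<forall>p\<in>P. a + p (zs y H) \<in> W \<and> c (a + p (zs y H)) = c a))))"

definition win :: "('v::ab_group_add \<Rightarrow> 'a::ab_group_add) set \<Rightarrow> (nat \<Rightarrow> 'v) \<Rightarrow> nat \<Rightarrow> 'a set \<Rightarrow> ('a \<Rightarrow> nat) \<Rightarrow> bool" where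
  "win P0 y N W c \<longleftrightarrow> (\<exists>a H. H \<subseteq> {..<N} \<and> H \<noteq> {} \<and> a \<in> W \<and> (\<forall>p\<in>P0. a + p (zs y H) \<in> W \<and> c (a + p (zs y H)) = c a))"

definition conf :: "('v::ab_group_add \<Rightarrow> 'a::ab_group_add) set \<Rightarrow> ('v \<Rightarrow> 'a) \<Rightarrow> (nat \<Rightarrow> 'v) \<Rightarrow> nat \<Rightarrow> 'a set \<Rightarrow> ('a \<Rightarrow> nat) \<Rightarrow> nat \<Rightarrow> bool" where
  "conf P0 p1 y N W c s \<longleftrightarrow> (\<exists>a K. a \<in> W \<and> (\<forall>l<s. K l \<subseteq> {..<N} \<and> K l \<noteq> {} \<and>
      (\<forall>p\<in>P0. a + p (zs y (K l)) \<in> W \<and> c (a + p (zs y (K l))) = c (a + p1 (zs y (K l)))))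
      \<and> inj_on (\<lambda>l. c (a + p1 (zs y (K l)))) {..<s} \<and> (\<forall>l<s. c (a + p1 (zs y (K l))) \<noteq> c a))"

definition FC :: "('v::ab_group_add \<Rightarrow> 'a::ab_group_add) set \<Rightarrow> ('v \<Rightarrow> 'a) \<Rightarrow> nat \<Rightarrow> bool" where
  "FC P0 p1 s \<longleftrightarrow> (\<forall>(y::nat \<Rightarrow> 'v) r. \<exists>N W. finite W \<and> (\<forall>c. (\<forall>u. c u < r) \<longrightarrow> win P0 y N W c \<or> conf P0 p1 y N W c s))"

lemma FC_0: "FC P0 p1 0"
  unfolding FC_def conf_def by (intro allI exI[of _ 0] exI[of _ "{0}"]) auto

lemma focus_step:
  fixes P0 :: "('v::ab_group_add \<Rightarrow> 'a::ab_group_add) set" and p1 :: "'v \<Rightarrow> 'a"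
  assumes p1: "p1 \<in> P0" and van: "\<forall>p\<in>P0. p 0 = 0"
    and IHQ: "\<And>X. finite X \<Longrightarrow> PV ((\<lambda>(p, x). qq p1 p x) ` (P0 \<times> X))"
    and FCs: "FC P0 p1 s"
  shows "FC P0 p1 (Suc s)"
  unfolding FC_def
proof (intro allI)
  fix y :: "nat \<Rightarrow> 'v" and r :: nat
  obtain N W where fW: "finite W" and HW0: "\<forall>c. (\<forall>u. c u < r) \<longrightarrow> win P0 y N W c \<or> conf P0 p1 y N W c s"
    using FCs[unfolded FC_def, rule_format, where y=y and r=r] by blast
  have HW: "\<And>c. (\<forall>u. c u < r) \<Longrightarrow> win P0 y N W c \<or> conf P0 p1 y N W c s" using HW0 by blast
  define X where "X = zs y ` Pow {..<N}"
  have fX: "finite X" unfolding X_def by simp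
  define Qs where "Qs = (\<lambda>(p, x). qq p1 p x) ` (P0 \<times> X)"
  have PVQ: "PV Qs" unfolding Qs_def using IHQ fX .
  define PS where "PS = PiE W (\<lambda>_. {..<r})"
  have fPS: "finite PS" unfolding PS_def using fW by (simp add: finite_PiE)
  obtain enc :: "('a \<Rightarrow> nat) \<Rightarrow> nat" and n where enc: "enc ` PS = {i. i < n}" "inj_on enc PS"
    using finite_imp_inj_to_nat_seg[OF fPS] by blast
  define y' where "y' = (\<lambda>m. y (m + N))"
  have "\<exists>N W. finite W \<and> (\<forall>c::'a \<Rightarrow> nat. (\<forall>u. c u < n) \<longrightarrow>
     (\<exists>a H. H \<subseteq> {..<N} \<and> H \<noteq> {} \<and> a \<in> W \<and> (\<forall>p\<in>Qs. a + p (zs y' H) \<in> W \<and> c (a + p (zs y' H)) = c a)))"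
    using PVQ[unfolded PV_def, rule_format, where y=y' and r=n] .
  then obtain N' W' where fW': "finite W'" and HW'0: "\<forall>c::'a \<Rightarrow> nat. (\<forall>u. c u < n) \<longrightarrow>
     (\<exists>a H. H \<subseteq> {..<N'} \<and> H \<noteq> {} \<and> a \<in> W' \<and> (\<forall>p\<in>Qs. a + p (zs y' H) \<in> W' \<and> c (a + p (zs y' H)) = c a))"
    by blast
  note HW' = HW'0[rule_format]
  define Hs where "Hs = zs y' ` Pow {..<N'}"
  define W'' where "W'' = (\<lambda>(u, w, h). u + w - p1 h) ` (W' \<times> W \<times> Hs)"
  have fW'': "finite W''" unfolding W''_def Hs_def using fW fW' by simp
  have p10: "p1 0 = 0" using van p1 by blast
  have zs0: "zs y' {} = 0" "zs y {} = 0" by (simp_all add: zs_def)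
  have memb: "u + w \<in> W''" if "u \<in> W'" "w \<in> W" for u w
  proof -
    have "0 \<in> Hs" unfolding Hs_def using zs0 by force
    then have "u + w - p1 0 \<in> W''" unfolding W''_def using that by force
    then show ?thesis using p10 by simp
  qed
  show "\<exists>N W. finite W \<and> (\<forall>c. (\<forall>u. c u < r) \<longrightarrow> win P0 y N W c \<or> conf P0 p1 y N W c (Suc s))"
  proof (intro exI[of _ "N + N'"] exI[of _ W''] conjI allI impI)
    show "finite W''" by (rule fW'')
    fix c :: "'a \<Rightarrow> nat" assume c: "\<forall>u. c u < r"
    define \<chi> where "\<chi> u = enc (restrict (\<lambda>w. c (u + w)) W)" for u
    have rPS: "restrict (\<lambda>w. c (u + w)) W \<in> PS" for u unfolding PS_def using c by auto
    have "\<chi> u < n" for u unfolding \<chi>_def using enc(1) rPS by blast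
    then obtain b H' where H': "H' \<subseteq> {..<N'}" "H' \<noteq> {}" "b \<in> W'"
      and Hq: "\<forall>q\<in>Qs. b + q (zs y' H') \<in> W' \<and> \<chi> (b + q (zs y' H')) = \<chi> b"
      using HW'[of \<chi>] by blast
    define h where "h = zs y' H'"
    have hHs: "h \<in> Hs" unfolding h_def Hs_def using H'(1) by blast
    have transfer: "c (b + q h + w) = c (b + w)" if "q \<in> Qs" "w \<in> W" for q w
    proof -
      have "enc (restrict (\<lambda>w. c (b + q h + w)) W) = enc (restrict (\<lambda>w. c (b + w)) W)"
        using Hq that(1) unfolding \<chi>_def h_def by blast
      then have "restrict (\<lambda>w. c (b + q h + w)) W = restrict (\<lambda>w. c (b + w)) W"
        using enc(2) rPS inj_onD by metis
      then show ?thesis using that(2) by (metis restrict_apply')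
    qed
    have cb: "\<forall>u. c (b + u) < r" using c by blast
    from HW[OF cb] show "win P0 y (N + N') W'' c \<or> conf P0 p1 y (N + N') W'' c (Suc s)"
    proof
      assume "win P0 y N W (\<lambda>u. c (b + u))"
      then obtain a H where aH: "H \<subseteq> {..<N}" "H \<noteq> {}" "a \<in> W"
        "\<forall>p\<in>P0. a + p (zs y H) \<in> W \<and> c (b + (a + p (zs y H))) = c (b + a)"
        unfolding win_def by blast
      have "win P0 y (N + N') W'' c"
        unfolding win_def
      proof (intro exI[of _ "b + a"] exI[of _ H] conjI ballI)
        show "H \<subseteq> {..<N + N'}" "H \<noteq> {}" using aH by auto
        show "b + a \<in> W''" using memb H'(3) aH(3) by blast
        fix p assume "p \<in> P0"
        then show "b + a + p (zs y H) \<in> W''" "c (b + a + p (zs y H)) = c (b + a)"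
          using aH(4) memb H'(3) by (auto simp: add.assoc)
      qed
      then show ?thesis ..
    next
      assume "conf P0 p1 y N W (\<lambda>u. c (b + u)) s"
      then obtain a K where aW: "a \<in> W"
        and Kp: "\<forall>l<s. K l \<subseteq> {..<N} \<and> K l \<noteq> {} \<and>
          (\<forall>p\<in>P0. a + p (zs y (K l)) \<in> W \<and> c (b + (a + p (zs y (K l)))) = c (b + (a + p1 (zs y (K l)))))"
        and Kinj: "inj_on (\<lambda>l. c (b + (a + p1 (zs y (K l))))) {..<s}"
        and Kne: "\<forall>l<s. c (b + (a + p1 (zs y (K l)))) \<noteq> c (b + a)"
        unfolding conf_def by blast
      define H0 where "H0 = (\<lambda>m. m + N) ` H'"
      have zH0: "zs y H0 = h" unfolding zs_def H0_def h_def y'_def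
        by (subst sum.reindex) (auto simp: inj_on_def)
      have H0sub: "H0 \<subseteq> {..<N + N'}" "H0 \<noteq> {}" "\<forall>m\<in>H0. N \<le> m" using H' unfolding H0_def by auto
      define a'' where "a'' = b + a - p1 h"
      define K'' where "K'' l = (if l < s then K l \<union> H0 else H0)" for l
      define col where "col l = (if l < s then c (b + (a + p1 (zs y (K l)))) else c (b + a))" for l
      have a''W: "a'' \<in> W''" unfolding a''_def W''_def using H'(3) aW hHs by force
      have K''sub: "K'' l \<subseteq> {..<N + N'} \<and> K'' l \<noteq> {}" if "l < Suc s" for l
      proof (cases "l < s")
        case True
        then have "K l \<subseteq> {..<N}" using Kp by blast
        then show ?thesis using H0sub True unfolding K''_def by auto
      next
        case False
        then show ?thesis using H0sub unfolding K''_def by simp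
      qed
      have G: "a'' + p (zs y (K'' l)) \<in> W'' \<and> c (a'' + p (zs y (K'' l))) = col l"
        if l: "l < Suc s" and p: "p \<in> P0" for l p
      proof (cases "l < s")
        case True
        define x where "x = zs y (K l)"
        have Kl: "K l \<subseteq> {..<N}" using Kp True by blast
        have xX: "x \<in> X" unfolding x_def X_def using Kl by blast
        have disj: "K l \<inter> H0 = {}" using Kl H0sub(3) by fastforce
        have fin: "finite (K l)" "finite H0" using Kl finite_subset H0sub(1) by (auto intro: finite_subset)
        have zK: "zs y (K'' l) = x + h"
          unfolding K''_def x_def using True zH0 sum.union_disjoint[OF fin disj, of y] by (simp add: zs_def)
        have qQ: "qq p1 p x \<in> Qs" unfolding Qs_def using p xX by force
        have eq: "a'' + p (zs y (K'' l)) = (b + qq p1 p x h) + (a + p x)"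
          unfolding zK a''_def qq_def by (simp add: algebra_simps)
        have apx: "a + p x \<in> W" using Kp True p x_def by blast
        have "c (a'' + p (zs y (K'' l))) = c (b + (a + p x))" unfolding eq by (rule transfer[OF qQ apx])
        also have "\<dots> = col l" unfolding col_def x_def using Kp True p by simp
        finally show ?thesis using eq memb Hq qQ apx unfolding h_def by simp
      next
        case False
        then have ls: "l = s" using l by simp
        have zK: "zs y (K'' l) = h" unfolding K''_def using False zH0 by simp
        have x0: "0 \<in> X" unfolding X_def using zs0 by force
        have qQ: "qq p1 p 0 \<in> Qs" unfolding Qs_def using p x0 by force
        have p0: "p 0 = 0" using van p by blast
        have eq: "a'' + p (zs y (K'' l)) = (b + qq p1 p 0 h) + a"
          unfolding zK a''_def qq_def using p0 by (simp add: algebra_simps)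
        have "c (a'' + p (zs y (K'' l))) = c (b + a)" unfolding eq by (rule transfer[OF qQ aW])
        also have "\<dots> = col l" unfolding col_def using False by simp
        finally show ?thesis using eq memb Hq qQ aW unfolding h_def by simp
      qed
      have colp1: "c (a'' + p1 (zs y (K'' l))) = col l" if "l < Suc s" for l using G[OF that p1] by blast
      show ?thesis
      proof (cases "\<exists>l<Suc s. col l = c a''")
        case True
        then obtain l where l: "l < Suc s" "col l = c a''" by blast
        have "win P0 y (N + N') W'' c"
          unfolding win_def
          using K''sub[OF l(1)] a''W G[OF l(1)] l(2) by (intro exI[of _ a''] exI[of _ "K'' l"]) auto
        then show ?thesis ..
      next
        case False
        have icol: "inj_on col {..<Suc s}"
        proof (rule inj_onI)
          fix l l' assume ll: "l \<in> {..<Suc s}" "l' \<in> {..<Suc s}" "col l = col l'"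
          show "l = l'"
          proof (cases "l < s"; cases "l' < s")
            assume "l < s" "l' < s" then show ?thesis using ll Kinj unfolding col_def by (auto dest: inj_onD)
          next
            assume "l < s" "\<not> l' < s" then show ?thesis using ll Kne unfolding col_def by auto
          next
            assume "\<not> l < s" "l' < s" then show ?thesis using ll Kne unfolding col_def by (auto simp: eq_commute)
          next
            assume "\<not> l < s" "\<not> l' < s" then show ?thesis using ll by auto
          qed
        qed
        have "conf P0 p1 y (N + N') W'' c (Suc s)"
          unfolding conf_def
        proof (intro exI[of _ a''] exI[of _ K''] conjI allI impI)
          show "a'' \<in> W''" by (rule a''W)
          fix l assume l: "l < Suc s"
          show "K'' l \<subseteq> {..<N + N'}" "K'' l \<noteq> {}" using K''sub[OF l] by auto
          show "\<forall>p\<in>P0. a'' + p (zs y (K'' l)) \<in> W'' \<and> c (a'' + p (zs y (K'' l))) = c (a'' + p1 (zs y (K'' l)))"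
            using G[OF l] colp1[OF l] by auto
          show "c (a'' + p1 (zs y (K'' l))) \<noteq> c a''" using colp1[OF l] False l by auto
        next
          show "inj_on (\<lambda>l. c (a'' + p1 (zs y (K'' l)))) {..<Suc s}"
            using icol colp1 by (simp add: inj_on_def)
        qed
        then show ?thesis ..
      qed
    qed
  qed
qed

lemma PV_all: "good P \<Longrightarrow> PV P"
proof (induction "wt P" arbitrary: P rule: less_induct)
  case less
  show ?case
  proof (cases "nz P = {}")
    case True
    then have z: "\<And>p x. p \<in> P \<Longrightarrow> p x = 0" unfolding nz_def by blast
    show ?thesis unfolding PV_def
      by (intro allI exI[of _ 1] exI[of _ "{0}"] conjI impI exI[of _ 0] exI[of _ "{0}"]) (auto simp: z)
  next
    case False
    then obtain p0 where "p0 \<in> nz P" by blast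
    then obtain p1 where p1: "p1 \<in> nz P" and mn: "\<forall>p\<in>nz P. deg p1 \<le> deg p"
      using ex_has_least_nat[of "\<lambda>p. p \<in> nz P" p0 deg] by blast
    have IHQ: "PV ((\<lambda>(p, x). qq p1 p x) ` (nz P \<times> X))" if "finite X" for X
      using less(1)[OF wt_decr[OF less(2) p1 mn that] good_qf[OF less(2) p1 that]] unfolding qf_def .
    have van: "\<forall>p\<in>nz P. p 0 = 0" using less(2) unfolding good_def nz_def by auto
    have FCs: "FC (nz P) p1 s" for s
    proof (induction s)
      case 0 show ?case by (rule FC_0)
    next
      case (Suc s) show ?case by (rule focus_step[OF p1 van IHQ Suc.IH])
    qed
    show ?thesis unfolding PV_def
    proof (intro allI)
      fix y :: "nat \<Rightarrow> 'a" and r :: nat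
      obtain N W where fW: "finite W" and HW0: "\<forall>c. (\<forall>u. c u < r) \<longrightarrow> win (nz P) y N W c \<or> conf (nz P) p1 y N W c r"
        using FCs[of r, unfolded FC_def, rule_format, where y=y and r=r] by blast
      have HW: "\<And>c. (\<forall>u. c u < r) \<Longrightarrow> win (nz P) y N W c \<or> conf (nz P) p1 y N W c r" using HW0 by blast
      show "\<exists>N W. finite W \<and> (\<forall>c::'b \<Rightarrow> nat. (\<forall>u. c u < r) \<longrightarrow>
         (\<exists>a H. H \<subseteq> {..<N} \<and> H \<noteq> {} \<and> a \<in> W \<and> (\<forall>p\<in>P. a + p (zs y H) \<in> W \<and> c (a + p (zs y H)) = c a)))"
      proof (intro exI[of _ N] exI[of _ W] conjI allI impI)
        show "finite W" by (rule fW)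
        fix c :: "'b \<Rightarrow> nat" assume c: "\<forall>u. c u < r"
        from HW[OF c] show "\<exists>a H. H \<subseteq> {..<N} \<and> H \<noteq> {} \<and> a \<in> W \<and> (\<forall>p\<in>P. a + p (zs y H) \<in> W \<and> c (a + p (zs y H)) = c a)"
        proof
          assume "win (nz P) y N W c"
          then obtain a H where aH: "H \<subseteq> {..<N}" "H \<noteq> {}" "a \<in> W"
            "\<forall>p\<in>nz P. a + p (zs y H) \<in> W \<and> c (a + p (zs y H)) = c a" unfolding win_def by blast
          have "\<forall>p\<in>P. a + p (zs y H) \<in> W \<and> c (a + p (zs y H)) = c a"
          proof
            fix p assume "p \<in> P"
            then show "a + p (zs y H) \<in> W \<and> c (a + p (zs y H)) = c a"
              using aH by (cases "p \<in> nz P") (auto simp: nz_def)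
          qed
          then show ?thesis using aH by blast
        next
          assume "conf (nz P) p1 y N W c r"
          then obtain a K where aW: "a \<in> W"
            and Kinj: "inj_on (\<lambda>l. c (a + p1 (zs y (K l)))) {..<r}"
            and Kne: "\<forall>l<r. c (a + p1 (zs y (K l))) \<noteq> c a"
            unfolding conf_def by blast
          have "(\<lambda>l. c (a + p1 (zs y (K l)))) ` {..<r} \<subseteq> {..<r} - {c a}" using Kne c by auto
          from card_inj_on_le[OF Kinj this] have "r \<le> r - 1" using c[rule_format, of a] by simp
          then show ?thesis using c[rule_format, of a] by simp
        qed
      qed
    qed
  qed
qed

lemma sum_fun_app: "(\<Sum>n\<in>H. f n) i = (\<Sum>n\<in>H. f n i)"
  by (induction H rule: infinite_finite_induct) auto

lemma deg_le_cmult: "deg_le d g \<Longrightarrow> deg_le d (\<lambda>h. (c::'a::comm_ring) * g h)"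
proof (induction d arbitrary: g)
  case 0 then show ?case by simp metis
next
  case (Suc d)
  show ?case
  proof (simp only: deg_le.simps, intro allI)
    fix x
    have e: "(\<lambda>h. c * g (h + x) - c * g h) = (\<lambda>h. c * (g (h + x) - g h))"
      by (simp add: algebra_simps)
    have "deg_le d (\<lambda>h. g (h + x) - g h)" using Suc.prems by simp
    from Suc.IH[OF this] show "deg_le d (\<lambda>h. c * g (h + x) - c * g h)" unfolding e .
  qed
qed

lemma deg_le_mult:
  fixes f g :: "'v::ab_group_add \<Rightarrow> 'a::comm_ring"
  shows "deg_le m f \<Longrightarrow> deg_le n g \<Longrightarrow> deg_le (m + n) (\<lambda>h. f h * g h)"
proof (induction "m + n" arbitrary: m n f g)
  case 0
  then have "m = 0" "n = 0" by auto
  then show ?case using 0 by simp metis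
next
  case (Suc k)
  show ?case
  proof (cases m)
    case 0
    then have "\<forall>h. f h = f 0" using Suc.prems(1) by simp
    then have "(\<lambda>h. f h * g h) = (\<lambda>h. f 0 * g h)" by metis
    then show ?thesis using deg_le_cmult[OF Suc.prems(2)] 0 by simp
  next
    case (Suc m')
    show ?thesis
    proof (cases n)
      case 0
      then have "\<forall>h. g h = g 0" using Suc.prems(2) by simp
      then have "(\<lambda>h. f h * g h) = (\<lambda>h. g 0 * f h)" by (metis mult.commute)
      then show ?thesis using deg_le_cmult[OF Suc.prems(1)] 0 by simp
    next
      case (Suc n')
      have mn: "m + n = Suc k" using Suc.hyps(2) by simp
      have "deg_le k (\<lambda>h. f (h + x) * g (h + x) - f h * g h)" for x
      proof -
        have A: "deg_le m' (\<lambda>h. f (h + x) - f h)" using Suc.prems(1) \<open>m = Suc m'\<close> by simp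
        have B: "deg_le n (\<lambda>h. g (h + x))" using deg_le_shift[OF Suc.prems(2)] .
        have k1: "k = m' + n" using mn \<open>m = Suc m'\<close> by simp
        have I1: "deg_le k (\<lambda>h. (f (h + x) - f h) * g (h + x))" using Suc.hyps(1)[OF k1 A B] k1 by simp
        have C: "deg_le n' (\<lambda>h. g (h + x) - g h)" using Suc.prems(2) \<open>n = Suc n'\<close> by simp
        have k2: "k = m + n'" using mn \<open>n = Suc n'\<close> by simp
        have I2: "deg_le k (\<lambda>h. f h * (g (h + x) - g h))" using Suc.hyps(1)[OF k2 Suc.prems(1) C] k2 by simp
        have e: "(\<lambda>h. (f (h + x) - f h) * g (h + x) + f h * (g (h + x) - g h)) = (\<lambda>h. f (h + x) * g (h + x) - f h * g h)"
          by (simp add: algebra_simps)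
        show ?thesis using deg_le_add[OF I1 I2] unfolding e .
      qed
      then show ?thesis unfolding mn by simp
    qed
  qed
qed

lemma deg_le_coord: "deg_le (Suc 0) (\<lambda>h::nat \<Rightarrow> 'a::ab_group_add. h i)"
  by simp

lemma deg_le_pow: "deg_le k (\<lambda>h::nat \<Rightarrow> 'a::comm_ring_1. h i ^ k)"
proof (induction k)
  case 0 then show ?case by (simp add: deg_le_const)
next
  case (Suc k)
  from deg_le_mult[OF deg_le_coord Suc.IH] show ?case by simp
qed

lemma deg_le_prodp: "finite I \<Longrightarrow> deg_le (\<Sum>i\<in>I. e i) (\<lambda>h::nat \<Rightarrow> 'a::comm_ring_1. \<Prod>i\<in>I. h i ^ e i)"
proof (induction I rule: finite_induct)
  case empty then show ?case by (simp add: deg_le_const)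
next
  case (insert i I)
  from deg_le_mult[OF deg_le_pow[of "e i" i] insert.IH] show ?case using insert.hyps by simp
qed

lemma deg_le_sumE: "finite E \<Longrightarrow> (\<forall>e\<in>E. deg_le D (t e)) \<Longrightarrow> deg_le D (\<lambda>h. \<Sum>e\<in>E. t e h)"
proof (induction E rule: finite_induct)
  case empty then show ?case by (simp add: deg_le_const)
next
  case (insert e E)
  then show ?case using deg_le_add[of D "t e" "\<lambda>h. \<Sum>e\<in>E. t e h"] by simp
qed

lemma integral_poly_good:
  fixes f :: "(nat \<Rightarrow> 'a::comm_ring_1) \<Rightarrow> 'a"
  assumes "integral_poly j f"
  shows "fdeg f \<and> f 0 = 0"
proof -
  obtain E c where E: "finite E" "\<forall>e\<in>E. (\<forall>i\<ge>j. e i = (0::nat)) \<and> e \<noteq> (\<lambda>_. 0)"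
    and fx: "\<forall>x. f x = (\<Sum>e\<in>E. c e * (\<Prod>i<j. x i ^ e i))"
    using assms unfolding integral_poly_def by blast
  have fe: "f = (\<lambda>h. \<Sum>e\<in>E. c e * (\<Prod>i<j. h i ^ e i))" using fx by auto
  define D where "D = (\<Sum>e\<in>E. \<Sum>i<j. e i)"
  have "\<forall>e\<in>E. deg_le D (\<lambda>h. c e * (\<Prod>i<j. h i ^ e i))"
  proof
    fix e assume e: "e \<in> E"
    have le: "(\<Sum>i<j. e i) \<le> D" unfolding D_def using member_le_sum[OF e _ E(1), of "\<lambda>e. \<Sum>i<j. e i"] by simp
    show "deg_le D (\<lambda>h. c e * (\<Prod>i<j. h i ^ e i))"
      by (rule deg_le_mono[OF deg_le_cmult[OF deg_le_prodp] le]) simp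
  qed
  from deg_le_sumE[OF E(1) this] have "fdeg f" unfolding fe fdeg_def by blast
  moreover have "f 0 = 0"
  proof -
    have "c e * (\<Prod>i<j. (0::nat \<Rightarrow> 'a) i ^ e i) = 0" if e: "e \<in> E" for e
    proof -
      have "e \<noteq> (\<lambda>_. 0)" using E(2) e by blast
      then have "\<exists>i. e i \<noteq> 0" by (simp add: fun_eq_iff)
      then obtain i where i: "e i \<noteq> 0" by blast
      then have "i < j" using E(2) e by (meson not_le)
      moreover have "(0::nat \<Rightarrow> 'a) i ^ e i = 0" using i by (simp add: power_0_left)
      ultimately have "\<exists>a\<in>{..<j}. (0::nat \<Rightarrow> 'a) a ^ e a = 0" by blast
      then have "(\<Prod>i<j. (0::nat \<Rightarrow> 'a) i ^ e i) = 0" by (metis finite_lessThan prod_zero)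
      then show ?thesis by simp
    qed
    then show ?thesis using fx by simp
  qed
  ultimately show ?thesis by blast
qed

theorem corollary4p2:
  fixes S :: "'a::idom set" and A :: "'a set" and j :: nat
    and R :: "((nat \<Rightarrow> 'a) \<Rightarrow> 'a) set" and y :: "nat \<Rightarrow> nat \<Rightarrow> 'a"
  assumes "comm_semigroup_no_identity S"
    and "difference_group S = UNIV"
    and "j \<ge> 1"
    and "finite R" and "R \<noteq> {}" and "\<forall>f\<in>R. integral_poly j f"
    and "A \<subseteq> S" and "piecewise_syndetic S A"
    and "\<forall>n\<ge>1. \<forall>i<j. y n i \<in> S"
  shows "\<exists>a\<in>S. \<exists>H. finite H \<and> H \<noteq> {} \<and> H \<subseteq> {n. n \<ge> 1} \<and>
           (\<forall>f\<in>R. a + f (\<lambda>i. \<Sum>n\<in>H. y n i) \<in> A)"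
proof -
  have clos: "\<And>a b. a \<in> S \<Longrightarrow> b \<in> S \<Longrightarrow> a + b \<in> S"
    using assms(1) unfolding comm_semigroup_no_identity_def by blast
  have diff: "\<exists>s1\<in>S. \<exists>s2\<in>S. w = s1 - s2" for w
  proof -
    have "w \<in> difference_group S" using assms(2) by simp
    then show ?thesis unfolding difference_group_def by blast
  qed
  obtain s0 where s0: "s0 \<in> S" using diff[of 0] by blast
  have shift: "\<exists>u\<in>S. \<forall>w\<in>W. u + w \<in> S" if fW: "finite W" for W :: "'a set"
    using fW
  proof (induction W rule: finite_induct)
    case empty then show ?case using s0 by blast
  next
    case (insert w W)
    obtain u where u: "u \<in> S" "\<forall>w\<in>W. u + w \<in> S" using insert.IH by blast
    obtain s1 s2 where s: "s1 \<in> S" "s2 \<in> S" "w = s1 - s2" using diff by blast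
    have eq: "u + s2 + w = u + s1" using s by simp
    have "u + s2 \<in> S" using clos u s by blast
    moreover have "u + s2 + w \<in> S" using eq clos u s by simp
    moreover have "u + s2 + w' \<in> S" if "w' \<in> W" for w'
      using clos[of "u + w'" s2] u that s by (simp add: algebra_simps)
    ultimately show ?case by blast
  qed
  have "\<exists>G. finite G \<and> G \<subseteq> S \<and> (\<forall>F. finite F \<and> F \<subseteq> S \<longrightarrow>
           (\<exists>x\<in>S. (\<lambda>f. f + x) ` F \<subseteq> (\<Union>t\<in>G. left_translate_inv S t A)))"
    using assms(8) unfolding piecewise_syndetic_def .
  then obtain G where G: "finite G" "G \<subseteq> S"
    and GF0: "\<forall>F. finite F \<and> F \<subseteq> S \<longrightarrow> (\<exists>x\<in>S. (\<lambda>f. f + x) ` F \<subseteq> (\<Union>t\<in>G. left_translate_inv S t A))"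
    by (elim exE conjE)
  have GF: "\<exists>x\<in>S. (\<lambda>f. f + x) ` F \<subseteq> (\<Union>t\<in>G. left_translate_inv S t A)" if "finite F" "F \<subseteq> S" for F
    using GF0 that by simp
  have Gne: "G \<noteq> {}"
  proof
    assume "G = {}"
    obtain x where "x \<in> S" "(\<lambda>f. f + x) ` {s0} \<subseteq> (\<Union>t\<in>G. left_translate_inv S t A)"
      using GF[of "{s0}"] s0 by (auto elim: bexE)
    then show False using \<open>G = {}\<close> by simp
  qed
  obtain enc :: "'a \<Rightarrow> nat" and n where enc: "enc ` G = {i. i < n}" "inj_on enc G"
    using finite_imp_inj_to_nat_seg[OF G(1)] by blast
  obtain g0 where g0: "g0 \<in> G" using Gne by blast
  then have "enc g0 \<in> {i. i < n}" using enc(1) by blast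
  then have npos: "0 < n" by simp
  have gR: "good R" unfolding good_def using assms(4,6) integral_poly_good by blast
  have PVR: "PV R" using PV_all[OF gR] .
  define y' where "y' = (\<lambda>m. y (Suc m))"
  have "\<exists>N W. finite W \<and> (\<forall>c::'a \<Rightarrow> nat. (\<forall>u. c u < n) \<longrightarrow>
     (\<exists>a H. H \<subseteq> {..<N} \<and> H \<noteq> {} \<and> a \<in> W \<and> (\<forall>p\<in>R. a + p (zs y' H) \<in> W \<and> c (a + p (zs y' H)) = c a)))"
    using PVR[unfolded PV_def, rule_format, where y=y' and r=n] .
  then obtain N W where fW: "finite W" and HW: "\<forall>c::'a \<Rightarrow> nat. (\<forall>u. c u < n) \<longrightarrow>
     (\<exists>a H. H \<subseteq> {..<N} \<and> H \<noteq> {} \<and> a \<in> W \<and> (\<forall>p\<in>R. a + p (zs y' H) \<in> W \<and> c (a + p (zs y' H)) = c a))"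
    by blast
  obtain u where u: "u \<in> S" "\<forall>w\<in>W. u + w \<in> S" using shift[OF fW] by blast
  define F where "F = (\<lambda>w. u + w) ` W"
  have fF: "finite F" "F \<subseteq> S" unfolding F_def using fW u by auto
  obtain x where x: "x \<in> S" "(\<lambda>f. f + x) ` F \<subseteq> (\<Union>t\<in>G. left_translate_inv S t A)"
    using GF[OF fF] by blast
  have ex: "\<exists>t. t \<in> G \<and> t + (u + w + x) \<in> A" if "w \<in> W" for w
  proof -
    have "u + w + x \<in> (\<Union>t\<in>G. left_translate_inv S t A)" using x(2) that unfolding F_def by blast
    then show ?thesis unfolding left_translate_inv_def by blast
  qed
  define T where "T w = (SOME t. t \<in> G \<and> t + (u + w + x) \<in> A)" for w
  have T: "T w \<in> G \<and> T w + (u + w + x) \<in> A" if "w \<in> W" for w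
    unfolding T_def using someI_ex[OF ex[OF that]] .
  define c where "c w = (if w \<in> W then enc (T w) else 0)" for w
  have cb: "\<forall>w. c w < n"
  proof
    fix w show "c w < n"
      using T[of w] enc(1) npos unfolding c_def by (cases "w \<in> W") auto
  qed
  obtain a H where aH: "H \<subseteq> {..<N}" "H \<noteq> {}" "a \<in> W"
    and aR: "\<forall>p\<in>R. a + p (zs y' H) \<in> W \<and> c (a + p (zs y' H)) = c a"
    using mp[OF spec[OF HW, of c] cb] by blast
  have zeq: "(\<lambda>i. \<Sum>n\<in>Suc ` H. y n i) = zs y' H"
  proof
    fix i
    have "zs y' H i = (\<Sum>m\<in>H. y (Suc m) i)" unfolding zs_def y'_def by (rule sum_fun_app)
    also have "\<dots> = (\<Sum>n\<in>Suc ` H. y n i)" by (simp add: sum.reindex)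
    finally show "(\<Sum>n\<in>Suc ` H. y n i) = zs y' H i" by simp
  qed
  have Ta: "T a \<in> G" "T a + (u + a + x) \<in> A" using T[OF aH(3)] by auto
  show ?thesis
  proof (intro bexI[of _ "T a + (u + a + x)"] exI[of _ "Suc ` H"] conjI ballI)
    show "T a + (u + a + x) \<in> S" using Ta assms(7) by blast
    show "finite (Suc ` H)" using aH(1) finite_subset by blast
    show "Suc ` H \<noteq> {}" using aH(2) by simp
    show "Suc ` H \<subseteq> {n. n \<ge> 1}" by auto
    fix f assume f: "f \<in> R"
    define v where "v = a + f (zs y' H)"
    have vW: "v \<in> W" and cv: "c v = c a" using aR f unfolding v_def by auto
    have "enc (T v) = enc (T a)" using cv vW aH(3) unfolding c_def by simp
    then have Tv: "T v = T a" using enc(2) T[OF vW] Ta(1) by (meson inj_onD)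
    have "T a + (u + v + x) \<in> A" using T[OF vW] Tv by simp
    then show "T a + (u + a + x) + f (\<lambda>i. \<Sum>n\<in>Suc ` H. y n i) \<in> A"
      unfolding zeq v_def by (simp add: algebra_simps)
  qed
qed

end
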